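(* Fix $n\ge 1$, $\Gamma\ge 1$, a score function $\varphi:(0,1)\to[0,\infty)$, and any threshold function $f:(0,1)\to\mathbb{R}_{>0}$. Consider all joint distributions of the treatment assignments allowed by the sensitivity null hypothesis $H_0(\Gamma)$. Among these, the conditional rejection probability $$\mathbb{P}\big(\exists x\in(0,1): T_n(x)\ge f(x)\,\big|\,\mathcal{F}\big)$$ is maximized by the distribution under which the signs are conditionally independent across pairs and $\mathbb{P}(Y_i>0\mid\mathcal{F})=\Gamma/(1+\Gamma)$ for every $i\in\{1,\dots,n\}$.
   Context: Paired observational study: there are $n$ pairs; in pair $i$, units $j=1,2$ have control potential outcome $R_{Cij}$, treated potential outcome $R_{Tij}$ and treatment indicator $Z_{ij}\in\{0,1\}$. Throughout, everything is conditional on the event that exactly one unit per pair is treated ($Z_{i1}+Z_{i2}=1$ for all $i$). $\mathcal{F}$ is the $\sigma$-field generated by all potential outcomes. Observed outcomes are $R^{obs}_{ij}=Z_{ij}R_{Tij}+(1-Z_{ij})R_{Cij}$, and $Y_i=(Z_{i1}-Z_{i2})(R^{obs}_{i1}-R^{obs}_{i2})$ is the treated-minus-control difference. Standing assumption: $\mathbb{P}(Y_i=0)=0$ for all $i$. For $\Gamma\ge1$, the sensitivity null $H_0(\Gamma)$ asserts: $R_{Tij}=R_{Cij}$ for all $i,j$; and conditional on $\mathcal{F}$, assignments are independent across pairs and for every $i$, $$\frac1\Gamma\le \frac{\mathbb{P}(Z_{i1}=1\mid\mathcal{F})/\mathbb{P}(Z_{i1}=0\mid\mathcal{F})}{\mathbb{P}(Z_{i2}=1\mid\mathcal{F})/\mathbb{P}(Z_{i2}=0\mid\mathcal{F})}\le\Gamma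 .$$ (Under $H_0(\Gamma)$, $Y_i=\pm|R_{Ci1}-R_{Ci2}|$ and $1/(1+\Gamma)\le\mathbb{P}(Y_i>0\mid\mathcal{F})\le\Gamma/(1+\Gamma)$.) Let $Y_{(1)},\dots,Y_{(n)}$ be the $Y_i$ ordered so that $|Y_{(1)}|\le\dots\le|Y_{(n)}|$. Set $c_i=\varphi(i/(n+1))$. Define $T_n(x)=0$ for $x<1/(n+1)$ and, for $x\ge 1/(n+1)$, $T_n(x)=\sum_{i=\lceil (1-x)(n+1)\rceil}^{n} c_i\,\mathbf{1}\{Y_{(i)}>0\}$. *)

theory Defs
  imports "HOL-Probability.Probability"
begin

(* Pairs are indexed by i \<in> {1..n}; units within a pair by j \<in> {1,2}.
   RC i j is the control potential outcome R_{Cij}; under H_0(\<Gamma>), R_T = R_C.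
   Z i = True means unit 1 of pair i is treated (Z_{i1}=1, Z_{i2}=0);
   Z i = False means unit 2 is treated (exactly one treated per pair). *)

definition Yobs :: "(nat \<Rightarrow> nat \<Rightarrow> real) \<Rightarrow> (nat \<Rightarrow> bool) \<Rightarrow> nat \<Rightarrow> real" where
  "Yobs RC Z i = (if Z i then RC i 1 - RC i 2 else RC i 2 - RC i 1)"

(* T_n(x); sigma gives the ordering: Y_(i) = Y (sigma i); c_i = phi(i/(n+1)) *)
definition Tstat :: "nat \<Rightarrow> (real \<Rightarrow> real) \<Rightarrow> (nat \<Rightarrow> nat) \<Rightarrow> (nat \<Rightarrow> real) \<Rightarrow> real \<Rightarrow> real" where
  "Tstat n \<phi> \<sigma> Y x =
     (if x < 1 / (real n + 1) then 0
      else (\<Sum>i\<in>{nat \<lceil>(1 - x) * (real n + 1)\<rceil>..n}.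
              \<phi> (real i / (real n + 1)) * (if Y (\<sigma> i) > 0 then 1 else 0)))"

(* Conditional (on F) law of the assignment vector: independent across pairs,
   with P(Z_{i1} = 1 | F) = q i. *)
definition assign_dist :: "nat \<Rightarrow> (nat \<Rightarrow> real) \<Rightarrow> (nat \<Rightarrow> bool) pmf" where
  "assign_dist n q = Pi_pmf {1..n} False (\<lambda>i. bernoulli_pmf (q i))"

definition admissible :: "nat \<Rightarrow> real \<Rightarrow> (nat \<Rightarrow> nat \<Rightarrow> real) \<Rightarrow> (nat \<Rightarrow> real) \<Rightarrow> bool" where
  "admissible n \<Gamma> RC q \<longleftrightarrow>
     (\<forall>i\<in>{1..n}. 1 / (1 + \<Gamma>) \<le> measure_pmf.prob (assign_dist n q) {Z. Yobs RC Z i > 0}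
              \<and> measure_pmf.prob (assign_dist n q) {Z. Yobs RC Z i > 0} \<le> \<Gamma> / (1 + \<Gamma>))"

definition reject_event :: "nat \<Rightarrow> (real \<Rightarrow> real) \<Rightarrow> (real \<Rightarrow> real) \<Rightarrow> (nat \<Rightarrow> nat) \<Rightarrow> (nat \<Rightarrow> nat \<Rightarrow> real) \<Rightarrow> (nat \<Rightarrow> bool) set" where
  "reject_event n \<phi> f \<sigma> RC = {Z. \<exists>x\<in>{0<..<1}. Tstat n \<phi> \<sigma> (Yobs RC Z) x \<ge> f x}"

end

theory Submission
  imports Defs
begin

lemma coupling_bern:
  fixes a b :: real
  assumes "0 \<le> a" "a \<le> b" "b \<le> 1"
  shows "\<exists>C. map_pmf fst C = bernoulli_pmf a \<and> map_pmf snd C = bernoulli_pmf b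
           \<and> (\<forall>xy\<in>set_pmf C. fst xy \<longrightarrow> snd xy)"
proof -
  define C where "C = bind_pmf (bernoulli_pmf b) (\<lambda>y. if y then map_pmf (\<lambda>x. (x, True)) (bernoulli_pmf (a/b)) else return_pmf (False, False))"
  have ab: "0 \<le> a/b" "a/b \<le> 1" using assms by (auto simp: divide_le_eq)
  have "map_pmf fst C = bind_pmf (bernoulli_pmf b) (\<lambda>y. if y then bernoulli_pmf (a/b) else return_pmf False)"
    unfolding C_def map_bind_pmf by (intro bind_pmf_cong refl) (auto simp: pmf.map_comp o_def)
  also have "\<dots> = bernoulli_pmf a"
  proof (rule pmf_eqI)
    fix x :: bool
    show "pmf (bind_pmf (bernoulli_pmf b) (\<lambda>y. if y then bernoulli_pmf (a/b) else return_pmf False)) x = pmf (bernoulli_pmf a) x"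
      using assms ab by (cases x; cases "b = 0") (auto simp: pmf_bind field_simps)
  qed
  finally have 1: "map_pmf fst C = bernoulli_pmf a" .
  have "map_pmf snd C = bind_pmf (bernoulli_pmf b) (\<lambda>y. return_pmf y)"
    unfolding C_def map_bind_pmf by (intro bind_pmf_cong refl) (auto simp: pmf.map_comp o_def)
  also have "\<dots> = bernoulli_pmf b" by (simp add: bind_return_pmf')
  finally have 2: "map_pmf snd C = bernoulli_pmf b" .
  have 3: "\<forall>xy\<in>set_pmf C. fst xy \<longrightarrow> snd xy"
    unfolding C_def by (auto split: if_splits)
  show ?thesis using 1 2 3 by blast
qed


lemma Yobs_pos:
  assumes "RC i 1 \<noteq> RC i (2::nat)"
  shows "(Yobs RC Z i > 0) \<longleftrightarrow> (Z i \<longleftrightarrow> RC i 2 < RC i 1)"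
  using assms by (auto simp: Yobs_def)

lemma prob_pos:
  assumes "i \<in> {1..n}" "0 \<le> q i" "q i \<le> 1" "RC i 1 \<noteq> RC i (2::nat)"
  shows "measure_pmf.prob (assign_dist n q) {Z. Yobs RC Z i > 0}
         = (if RC i 2 < RC i 1 then q i else 1 - q i)"
proof -
  have "{Z. Yobs RC Z i > 0} = (\<lambda>Z. Z i) -` {RC i 2 < RC i 1}"
    using Yobs_pos[of RC i, OF assms(4)] by auto
  hence "measure_pmf.prob (assign_dist n q) {Z. Yobs RC Z i > 0}
        = measure_pmf.prob (map_pmf (\<lambda>Z. Z i) (assign_dist n q)) {RC i 2 < RC i 1}"
    by simp
  also have "map_pmf (\<lambda>Z. Z i) (assign_dist n q) = bernoulli_pmf (q i)"
    unfolding assign_dist_def using assms(1) by (simp add: Pi_pmf_component)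
  finally show ?thesis using assms by (simp add: measure_pmf_single)
qed

lemma reject_mono:
  assumes "Z \<in> reject_event n \<phi> f \<sigma> RC"
    and "\<forall>i\<in>{1..n}. Yobs RC Z i > 0 \<longrightarrow> Yobs RC Z' i > 0"
    and "\<forall>x\<in>{0<..<1}. \<phi> x \<ge> 0"
    and "bij_betw \<sigma> {1..n} {1..n}"
  shows "Z' \<in> reject_event n \<phi> f \<sigma> RC"
proof -
  from assms(1) obtain x where x: "x \<in> {0<..<1}" "Tstat n \<phi> \<sigma> (Yobs RC Z) x \<ge> f x"
    unfolding reject_event_def by auto
  have "Tstat n \<phi> \<sigma> (Yobs RC Z) x \<le> Tstat n \<phi> \<sigma> (Yobs RC Z') x"
  proof (cases "x < 1 / (real n + 1)")
    case True thus ?thesis by (simp add: Tstat_def)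
  next
    case False
    have pos: "(1 - x) * (real n + 1) > 0" using x(1) by simp
    show ?thesis unfolding Tstat_def using False
    proof (simp, intro sum_mono)
      fix i assume i: "i \<in> {nat \<lceil>(1 - x) * (real n + 1)\<rceil>..n}"
      have c0: "0 < \<lceil>(1 - x) * (real n + 1)\<rceil>" using pos by simp
      have i1: "i \<ge> 1" using i c0 by auto
      have iin: "i \<in> {1..n}" using i i1 by auto
      have si: "\<sigma> i \<in> {1..n}" using assms(4) iin bij_betwE by blast
      have "real i / (real n + 1) \<in> {0<..<1}" using iin by (auto simp: field_simps)
      hence ph: "\<phi> (real i / (real n + 1)) \<ge> 0" using assms(3) by blast
      show "\<phi> (real i / (real n + 1)) * (if 0 < Yobs RC Z (\<sigma> i) then 1 else 0)
            \<le> \<phi> (real i / (real n + 1)) * (if 0 < Yobs RC Z' (\<sigma> i) then 1 else 0)"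
        using ph assms(2) si by auto
    qed
  qed
  thus ?thesis using x unfolding reject_event_def by force
qed


theorem proposition1:
  fixes n :: nat and \<Gamma> :: real and \<phi> f :: "real \<Rightarrow> real"
    and RC :: "nat \<Rightarrow> nat \<Rightarrow> real" and \<sigma> :: "nat \<Rightarrow> nat"
    and q qstar :: "nat \<Rightarrow> real"
  assumes "n \<ge> 1" and "\<Gamma> \<ge> 1"
    and "\<forall>x\<in>{0<..<1}. \<phi> x \<ge> 0"
    and "\<forall>x\<in>{0<..<1}. f x > 0"
    and "\<forall>i\<in>{1..n}. RC i 1 \<noteq> RC i 2"
    and "bij_betw \<sigma> {1..n} {1..n}"
    and "\<forall>i\<in>{1..n}. \<forall>j\<in>{1..n}. i \<le> j \<longrightarrow>
           \<bar>RC (\<sigma> i) 1 - RC (\<sigma> i) 2\<bar> \<le> \<bar>RC (\<sigma> j) 1 - RC (\<sigma> j) 2\<bar>"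
    and "\<forall>i\<in>{1..n}. 0 \<le> q i \<and> q i \<le> 1"
    and "admissible n \<Gamma> RC q"
    and "\<forall>i\<in>{1..n}. 0 \<le> qstar i \<and> qstar i \<le> 1"
    and "\<forall>i\<in>{1..n}. measure_pmf.prob (assign_dist n qstar) {Z. Yobs RC Z i > 0} = \<Gamma> / (1 + \<Gamma>)"
  shows "admissible n \<Gamma> RC qstar \<and>
         measure_pmf.prob (assign_dist n q) (reject_event n \<phi> f \<sigma> RC)
           \<le> measure_pmf.prob (assign_dist n qstar) (reject_event n \<phi> f \<sigma> RC)"
proof
  have g: "1 / (1 + \<Gamma>) \<le> \<Gamma> / (1 + \<Gamma>)" using assms(2) by (simp add: divide_right_mono)
  show "admissible n \<Gamma> RC qstar" unfolding admissible_def using assms(11) g by simp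
next
  let ?s = "\<lambda>i. RC i 2 < RC i 1"
  let ?P = "\<lambda>i C. map_pmf fst C = bernoulli_pmf (q i) \<and> map_pmf snd C = bernoulli_pmf (qstar i)
           \<and> (\<forall>xy\<in>set_pmf C. (fst xy \<longleftrightarrow> ?s i) \<longrightarrow> (snd xy \<longleftrightarrow> ?s i))"
  have ex: "\<exists>C. ?P i C" if i: "i \<in> {1..n}" for i
  proof -
    have pq: "measure_pmf.prob (assign_dist n q) {Z. Yobs RC Z i > 0} = (if ?s i then q i else 1 - q i)"
      using prob_pos[of i n q RC] i assms(8,5) by auto
    have pqs: "measure_pmf.prob (assign_dist n qstar) {Z. Yobs RC Z i > 0} = (if ?s i then qstar i else 1 - qstar i)"
      using prob_pos[of i n qstar RC] i assms(10,5) by auto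
    have le: "(if ?s i then q i else 1 - q i) \<le> (if ?s i then qstar i else 1 - qstar i)"
    proof -
      have "measure_pmf.prob (assign_dist n q) {Z. Yobs RC Z i > 0} \<le> \<Gamma> / (1 + \<Gamma>)"
        using assms(9) i unfolding admissible_def by blast
      thus ?thesis using pq pqs assms(11) i by simp
    qed
    show ?thesis
    proof (cases "?s i")
      case True
      then obtain C where C: "map_pmf fst C = bernoulli_pmf (q i)" "map_pmf snd C = bernoulli_pmf (qstar i)"
        "\<forall>xy\<in>set_pmf C. fst xy \<longrightarrow> snd xy"
        using coupling_bern[of "q i" "qstar i"] le assms(8,10) i by auto
      show ?thesis using C True by auto
    next
      case False
      then obtain C where C: "map_pmf fst C = bernoulli_pmf (qstar i)" "map_pmf snd C = bernoulli_pmf (q i)"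
        "\<forall>xy\<in>set_pmf C. fst xy \<longrightarrow> snd xy"
        using coupling_bern[of "qstar i" "q i"] le assms(8,10) i by auto
      have "?P i (map_pmf prod.swap C)"
        using C False by (auto simp: pmf.map_comp o_def)
      thus ?thesis by blast
    qed
  qed
  then obtain C where C: "\<forall>i\<in>{1..n}. ?P i (C i)" by metis
  define J where "J = Pi_pmf {1..n} (False, False) C"
  have m1: "map_pmf (\<lambda>h. fst \<circ> h) J = assign_dist n q"
    unfolding J_def assign_dist_def
    by (subst Pi_pmf_map[symmetric]) (auto intro!: Pi_pmf_cong simp: C)
  have m2: "map_pmf (\<lambda>h. snd \<circ> h) J = assign_dist n qstar"
    unfolding J_def assign_dist_def
    by (subst Pi_pmf_map[symmetric]) (auto intro!: Pi_pmf_cong simp: C)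
  let ?E = "reject_event n \<phi> f \<sigma> RC"
  have sub: "(\<lambda>h. fst \<circ> h) -` ?E \<inter> set_pmf J \<subseteq> (\<lambda>h. snd \<circ> h) -` ?E"
  proof
    fix h assume h: "h \<in> (\<lambda>h. fst \<circ> h) -` ?E \<inter> set_pmf J"
    have hi: "h i \<in> set_pmf (C i)" if "i \<in> {1..n}" for i
      using h that unfolding J_def by (auto simp: set_Pi_pmf PiE_dflt_def)
    have "\<forall>i\<in>{1..n}. Yobs RC (fst \<circ> h) i > 0 \<longrightarrow> Yobs RC (snd \<circ> h) i > 0"
    proof
      fix i assume i: "i \<in> {1..n}"
      have "RC i 1 \<noteq> RC i 2" using assms(5) i by auto
      thus "Yobs RC (fst \<circ> h) i > 0 \<longrightarrow> Yobs RC (snd \<circ> h) i > 0"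
        using C i hi[OF i] by (simp add: Yobs_pos)
    qed
    thus "h \<in> (\<lambda>h. snd \<circ> h) -` ?E"
      using reject_mono[of "fst \<circ> h" n \<phi> f \<sigma> RC "snd \<circ> h"] h assms(3,6) by auto
  qed
  have "measure_pmf.prob (assign_dist n q) ?E = measure_pmf.prob J ((\<lambda>h. fst \<circ> h) -` ?E \<inter> set_pmf J)"
    by (simp add: m1[symmetric] measure_Int_set_pmf)
  also have "\<dots> \<le> measure_pmf.prob J ((\<lambda>h. snd \<circ> h) -` ?E)"
    by (rule measure_pmf.finite_measure_mono[OF sub]) simp
  also have "\<dots> = measure_pmf.prob (assign_dist n qstar) ?E"
    by (simp add: m2[symmetric])
  finally show "measure_pmf.prob (assign_dist n q) ?E \<le> measure_pmf.prob (assign_dist n qstar) ?E" .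
qed

end
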